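(* Let $\kappa$ be an infinite cardinal. (i) If $\kappa=\aleph_1$, then neither $l^\infty(\kappa)$ nor $B(l^2(\kappa))$ has a regular singular state. (ii) If $\kappa$ is Ulam real-valued measurable, then both $l^\infty(\kappa)$ and $B(l^2(\kappa))$ have regular singular states.
   Context: $\kappa$ is Ulam real-valued measurable if there is a countably additive probability measure on all subsets of $\kappa$ vanishing on singletons. A state $\phi$ on a von Neumann algebra is regular if $\phi(q_n)=0$ for all $n$ implies $\phi(\bigvee q_n)=0$ for any countable set of projections $\{q_n\}$. A state on $l^\infty(\kappa)$ is singular if it vanishes on finitely supported functions; on $B(l^2(\kappa))$, if it vanishes on the compact operators. *)

theory Defs
  imports "HOL-Analysis.Analysis"
begin

section \<open>Cardinal notions on the index type 'k (the cardinal kappa = |UNIV :: 'k set|)\<close>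

definition is_aleph1 :: "'k itself \<Rightarrow> bool" where
  "is_aleph1 _ \<longleftrightarrow> (card_of (UNIV :: 'k set), cardSuc natLeq) \<in> ordIso"

definition ulam_rvm :: "'k itself \<Rightarrow> bool" where
  "ulam_rvm _ \<longleftrightarrow> (\<exists>\<mu> :: 'k set \<Rightarrow> real.
      (\<forall>A. \<mu> A \<ge> 0) \<and> \<mu> UNIV = 1 \<and> (\<forall>x. \<mu> {x} = 0) \<and>
      (\<forall>A :: nat \<Rightarrow> 'k set. disjoint_family A \<longrightarrow> (\<lambda>n. \<mu> (A n)) sums \<mu> (\<Union>n. A n)))"

definition cnonneg :: "complex \<Rightarrow> bool" where
  "cnonneg z \<longleftrightarrow> Im z = 0 \<and> Re z \<ge> 0"

definition linf :: "('k \<Rightarrow> complex) set" where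
  "linf = {f. bounded (range f)}"

definition linf_proj :: "('k \<Rightarrow> complex) \<Rightarrow> bool" where
  "linf_proj p \<longleftrightarrow> p \<in> linf \<and> (\<forall>x. p x * p x = p x \<and> cnj (p x) = p x)"

definition linf_proj_le :: "('k \<Rightarrow> complex) \<Rightarrow> ('k \<Rightarrow> complex) \<Rightarrow> bool" where
  "linf_proj_le p q \<longleftrightarrow> (\<forall>x. q x * p x = p x)"

definition linf_proj_sup :: "(nat \<Rightarrow> 'k \<Rightarrow> complex) \<Rightarrow> ('k \<Rightarrow> complex) \<Rightarrow> bool" where
  "linf_proj_sup q Q \<longleftrightarrow> linf_proj Q \<and> (\<forall>n. linf_proj_le (q n) Q) \<and>
     (\<forall>R. linf_proj R \<and> (\<forall>n. linf_proj_le (q n) R) \<longrightarrow> linf_proj_le Q R)"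

definition linf_state :: "(('k \<Rightarrow> complex) \<Rightarrow> complex) \<Rightarrow> bool" where
  "linf_state \<phi> \<longleftrightarrow>
     (\<forall>f\<in>linf. \<forall>g\<in>linf. \<forall>a b. \<phi> (\<lambda>x. a * f x + b * g x) = a * \<phi> f + b * \<phi> g) \<and>
     (\<forall>f\<in>linf. (\<forall>x. cnonneg (f x)) \<longrightarrow> cnonneg (\<phi> f)) \<and>
     \<phi> (\<lambda>_. 1) = 1"

definition linf_regular :: "(('k \<Rightarrow> complex) \<Rightarrow> complex) \<Rightarrow> bool" where
  "linf_regular \<phi> \<longleftrightarrow> (\<forall>q Q. (\<forall>n. linf_proj (q n)) \<and> linf_proj_sup q Q \<and> (\<forall>n. \<phi> (q n) = 0)
       \<longrightarrow> \<phi> Q = 0)"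

definition linf_singular :: "(('k \<Rightarrow> complex) \<Rightarrow> complex) \<Rightarrow> bool" where
  "linf_singular \<phi> \<longleftrightarrow> (\<forall>f. finite {x. f x \<noteq> 0} \<longrightarrow> \<phi> f = 0)"

definition l2 :: "('k \<Rightarrow> complex) set" where
  "l2 = {f. (\<lambda>x. (cmod (f x))\<^sup>2) summable_on UNIV}"

definition l2norm :: "('k \<Rightarrow> complex) \<Rightarrow> real" where
  "l2norm f = sqrt (infsum (\<lambda>x. (cmod (f x))\<^sup>2) UNIV)"

definition l2inner :: "('k \<Rightarrow> complex) \<Rightarrow> ('k \<Rightarrow> complex) \<Rightarrow> complex" where
  "l2inner f g = infsum (\<lambda>x. f x * cnj (g x)) UNIV"

type_synonym 'k l2op = "('k \<Rightarrow> complex) \<Rightarrow> ('k \<Rightarrow> complex)"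

text \<open>Bounded linear operators on l^2 (only their values on l^2 matter).\<close>
definition bop :: "'k l2op \<Rightarrow> bool" where
  "bop T \<longleftrightarrow> (\<forall>f\<in>l2. T f \<in> l2) \<and>
     (\<forall>f\<in>l2. \<forall>g\<in>l2. \<forall>a b. T (\<lambda>x. a * f x + b * g x) = (\<lambda>x. a * T f x + b * T g x)) \<and>
     (\<exists>C. \<forall>f\<in>l2. l2norm (T f) \<le> C * l2norm f)"

definition op_lin :: "complex \<Rightarrow> 'k l2op \<Rightarrow> complex \<Rightarrow> 'k l2op \<Rightarrow> 'k l2op" where
  "op_lin a S b T = (\<lambda>f x. a * S f x + b * T f x)"

definition op_eq :: "'k l2op \<Rightarrow> 'k l2op \<Rightarrow> bool" where
  "op_eq S T \<longleftrightarrow> (\<forall>f\<in>l2. S f = T f)"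

definition bproj :: "'k l2op \<Rightarrow> bool" where
  "bproj P \<longleftrightarrow> bop P \<and> op_eq (P \<circ> P) P \<and> (\<forall>f\<in>l2. \<forall>g\<in>l2. l2inner (P f) g = l2inner f (P g))"

definition bproj_le :: "'k l2op \<Rightarrow> 'k l2op \<Rightarrow> bool" where
  "bproj_le P Q \<longleftrightarrow> op_eq (Q \<circ> P) P"

definition bproj_sup :: "(nat \<Rightarrow> 'k l2op) \<Rightarrow> 'k l2op \<Rightarrow> bool" where
  "bproj_sup q Q \<longleftrightarrow> bproj Q \<and> (\<forall>n. bproj_le (q n) Q) \<and>
     (\<forall>R. bproj R \<and> (\<forall>n. bproj_le (q n) R) \<longrightarrow> bproj_le Q R)"

definition cpt_op :: "'k l2op \<Rightarrow> bool" where
  "cpt_op T \<longleftrightarrow> bop T \<and> (\<forall>(f :: nat \<Rightarrow> 'k \<Rightarrow> complex). (\<forall>n. f n \<in> l2 \<and> l2norm (f n) \<le> 1) \<longrightarrow>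
     (\<exists>r :: nat \<Rightarrow> nat. strict_mono r \<and> (\<forall>e>0. \<exists>N. \<forall>m\<ge>N. \<forall>n\<ge>N.
        l2norm (\<lambda>x. T (f (r m)) x - T (f (r n)) x) < e)))"

definition bl2_state :: "('k l2op \<Rightarrow> complex) \<Rightarrow> bool" where
  "bl2_state \<phi> \<longleftrightarrow>
     (\<forall>S T a b. bop S \<and> bop T \<longrightarrow> \<phi> (op_lin a S b T) = a * \<phi> S + b * \<phi> T) \<and>
     (\<forall>T. bop T \<and> (\<forall>f\<in>l2. cnonneg (l2inner (T f) f)) \<longrightarrow> cnonneg (\<phi> T)) \<and>
     \<phi> id = 1"

definition bl2_regular :: "('k l2op \<Rightarrow> complex) \<Rightarrow> bool" where
  "bl2_regular \<phi> \<longleftrightarrow> (\<forall>q Q. (\<forall>n. bproj (q n)) \<and> bproj_sup q Q \<and> (\<forall>n. \<phi> (q n) = 0)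
       \<longrightarrow> \<phi> Q = 0)"

definition bl2_singular :: "('k l2op \<Rightarrow> complex) \<Rightarrow> bool" where
  "bl2_singular \<phi> \<longleftrightarrow> (\<forall>T. cpt_op T \<longrightarrow> \<phi> T = 0)"

end

theory Submission
  imports Defs "HOL-Library.Countable_Set_Type" "HOL-Probability.Probability_Measure"
begin

definition ind :: "'k set \<Rightarrow> 'k \<Rightarrow> complex" where
  "ind A x = (if x \<in> A then 1 else 0)"
definition ev :: "'k \<Rightarrow> 'k \<Rightarrow> complex" where "ev a = ind {a}"
definition mop :: "'k set \<Rightarrow> 'k l2op" where "mop A f x = ind A x * f x"

lemma infsum_single_pt:
  assumes "\<And>y. y \<noteq> a \<Longrightarrow> f y = 0"
  shows "infsum f UNIV = f a"
proof -
  have "infsum f UNIV = infsum f {a}"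
    by (rule infsum_cong_neutral) (use assms in auto)
  then show ?thesis by simp
qed

lemma l2inner_ev: "l2inner h (ev a) = h a"
  unfolding l2inner_def ev_def ind_def by (subst infsum_single_pt[of a]) auto

lemma ev_l2: "ev a \<in> l2" and l2norm_ev: "l2norm (ev a) = 1" and ev_self: "ev a a = 1"
proof -
  have s: "(\<lambda>x. (cmod (ev a x))\<^sup>2) summable_on UNIV"
  proof -
    have "(\<lambda>x. (cmod (ev a x))\<^sup>2) summable_on {a}" by simp
    then show ?thesis
      by (rule summable_on_cong_neutral[THEN iffD1, rotated -1]) (auto simp: ev_def ind_def)
  qed
  then show "ev a \<in> l2" unfolding l2_def by simp
  show "l2norm (ev a) = 1" unfolding l2norm_def
    by (subst infsum_single_pt[of a]) (auto simp: ev_def ind_def)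
  show "ev a a = 1" by (simp add: ev_def ind_def)
qed

lemma l2_sum: "f \<in> l2 \<Longrightarrow> (\<lambda>x. (cmod (f x))\<^sup>2) summable_on UNIV"
  unfolding l2_def by simp

lemma coord_le: assumes "f \<in> l2" shows "cmod (f x) \<le> l2norm f"
proof -
  have "(\<Sum>y\<in>{x}. (cmod (f y))\<^sup>2) \<le> infsum (\<lambda>y. (cmod (f y))\<^sup>2) UNIV"
    by (rule finite_sum_le_infsum) (use l2_sum[OF assms] in auto)
  then have "(cmod (f x))\<^sup>2 \<le> infsum (\<lambda>y. (cmod (f y))\<^sup>2) UNIV" by simp
  moreover have "0 \<le> infsum (\<lambda>y. (cmod (f y))\<^sup>2) UNIV" by (simp add: infsum_nonneg)
  ultimately show ?thesis unfolding l2norm_def by (intro real_le_rsqrt) auto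
qed

lemma l2norm_nonneg: "l2norm f \<ge> 0" unfolding l2norm_def by (simp add: infsum_nonneg)

lemma l2_mono: assumes "g \<in> l2" "\<And>x. cmod (f x) \<le> cmod (g x)" shows "f \<in> l2"
  unfolding l2_def mem_Collect_eq
  by (rule summable_on_comparison_test[OF l2_sum[OF assms(1)]])
     (use assms(2) in \<open>auto intro: power_mono\<close>)

lemma l2_diff: assumes "f \<in> l2" "g \<in> l2" shows "(\<lambda>x. f x - g x) \<in> l2"
proof -
  have s: "(\<lambda>x. 2 * (cmod (f x))\<^sup>2 + 2 * (cmod (g x))\<^sup>2) summable_on UNIV"
    using l2_sum[OF assms(1)] l2_sum[OF assms(2)]
    by (intro summable_on_add summable_on_cmult_right)
  have "(cmod (f x - g x))\<^sup>2 \<le> 2 * (cmod (f x))\<^sup>2 + 2 * (cmod (g x))\<^sup>2" for x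
  proof -
    have "cmod (f x - g x) \<le> cmod (f x) + cmod (g x)" by (rule norm_triangle_ineq4)
    then have "(cmod (f x - g x))\<^sup>2 \<le> (cmod (f x) + cmod (g x))\<^sup>2"
      by (intro power_mono) auto
    also have "\<dots> \<le> 2 * (cmod (f x))\<^sup>2 + 2 * (cmod (g x))\<^sup>2"
      by (smt (verit) sum_squares_bound power2_sum)
    finally show ?thesis .
  qed
  then show ?thesis unfolding l2_def mem_Collect_eq
    by (intro summable_on_comparison_test[OF s]) auto
qed

lemma l2inner_self: assumes "h \<in> l2"
  shows "l2inner h h = of_real (infsum (\<lambda>x. (cmod (h x))\<^sup>2) UNIV)"
proof -
  have "((\<lambda>x. (cmod (h x))\<^sup>2) has_sum infsum (\<lambda>x. (cmod (h x))\<^sup>2) UNIV) UNIV"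
    using l2_sum[OF assms] by (rule has_sum_infsum)
  then have "((\<lambda>x. of_real ((cmod (h x))\<^sup>2) :: complex) has_sum of_real (infsum (\<lambda>x. (cmod (h x))\<^sup>2) UNIV)) UNIV"
    by (rule has_sum_of_real_iff[where 'a=complex, THEN iffD2])
  moreover have "(\<lambda>x. of_real ((cmod (h x))\<^sup>2) :: complex) = (\<lambda>x. h x * cnj (h x))"
    by (rule ext) (simp only: complex_mult_cnj cmod_power2)
  ultimately show ?thesis unfolding l2inner_def by (simp add: infsumI)
qed

lemma l2_finite_large: assumes "g \<in> l2" "d > 0" shows "finite {x. cmod (g x) \<ge> d}"
proof (rule ccontr)
  let ?S = "infsum (\<lambda>x. (cmod (g x))\<^sup>2) UNIV"
  assume "infinite {x. cmod (g x) \<ge> d}"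
  then obtain F where F: "F \<subseteq> {x. cmod (g x) \<ge> d}" "finite F" "card F = nat \<lceil>?S / d\<^sup>2\<rceil> + 1"
    using infinite_arbitrarily_large by blast
  have "(\<Sum>x\<in>F. d\<^sup>2) \<le> (\<Sum>x\<in>F. (cmod (g x))\<^sup>2)"
    using F assms(2) by (intro sum_mono power_mono) auto
  also have "\<dots> \<le> ?S" by (rule finite_sum_le_infsum) (use l2_sum[OF assms(1)] F in auto)
  finally have "real (card F) * d\<^sup>2 \<le> ?S" by simp
  moreover have "real (card F) > ?S / d\<^sup>2" using F(3) by linarith
  ultimately show False using assms(2) by (simp add: field_simps)
qed

lemma mop_l2: "f \<in> l2 \<Longrightarrow> mop A f \<in> l2"
  by (rule l2_mono[of f]) (auto simp: mop_def ind_def norm_mult)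

lemma l2norm_mop: assumes "f \<in> l2" shows "l2norm (mop A f) \<le> l2norm f"
proof -
  have "infsum (\<lambda>x. (cmod (mop A f x))\<^sup>2) UNIV \<le> infsum (\<lambda>x. (cmod (f x))\<^sup>2) UNIV"
    by (rule infsum_mono) (use l2_sum[OF assms] l2_sum[OF mop_l2[OF assms]] in
        \<open>auto simp: mop_def ind_def norm_mult\<close>)
  then show ?thesis unfolding l2norm_def by simp
qed

lemma bop_mop: "bop (mop A)"
  unfolding bop_def
proof (intro conjI ballI allI)
  show "\<exists>C. \<forall>f\<in>l2. l2norm (mop A f) \<le> C * l2norm f"
    by (rule exI[of _ 1]) (simp add: l2norm_mop)
qed (auto simp: mop_l2 mop_def algebra_simps)

lemma bproj_mop: "bproj (mop A)"
  unfolding bproj_def op_eq_def l2inner_def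
  by (auto simp: bop_mop mop_def ind_def intro!: infsum_cong)

lemma mop_disj: "A \<inter> B = {} \<Longrightarrow> mop (A \<union> B) = op_lin 1 (mop A) 1 (mop B)"
  by (auto simp: fun_eq_iff mop_def op_lin_def ind_def)

lemma mop_UNIV: "mop UNIV = id"
  by (auto simp: fun_eq_iff mop_def ind_def)

lemma mop_pos: "cnonneg (l2inner (mop A f) f)"
proof (cases "(\<lambda>x. mop A f x * cnj (f x)) summable_on UNIV")
  case True
  have "0 \<le> l2inner (mop A f) f" unfolding l2inner_def
    by (rule infsum_nonneg_complex[OF True])
       (auto simp: mop_def ind_def complex_mult_cnj less_eq_complex_def)
  then show ?thesis by (simp add: cnonneg_def less_eq_complex_def)
next
  case False
  then show ?thesis by (simp add: l2inner_def infsum_not_exists cnonneg_def)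
qed

lemma mop_ev: "x \<in> A \<Longrightarrow> mop A (ev x) = ev x"
  by (auto simp: fun_eq_iff mop_def ev_def ind_def)

lemma bproj_selfadj: "bproj R \<Longrightarrow> f \<in> l2 \<Longrightarrow> g \<in> l2 \<Longrightarrow> l2inner (R f) g = l2inner f (R g)"
  unfolding bproj_def by blast

lemma bproj_idem: "bproj R \<Longrightarrow> f \<in> l2 \<Longrightarrow> R (R f) = R f"
  unfolding bproj_def op_eq_def by auto

lemma bproj_l2: "bproj R \<Longrightarrow> f \<in> l2 \<Longrightarrow> R f \<in> l2"
  unfolding bproj_def bop_def by auto

lemma mop_le_fix:
  assumes R: "bproj R" and fx: "\<And>x. x \<in> U \<Longrightarrow> R (ev x) = ev x" and g: "g \<in> l2"
    and g0: "\<And>y. y \<notin> U \<Longrightarrow> g y = 0"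
  shows "R g = g"
proof -
  define h where "h = R g"
  have h: "h \<in> l2" unfolding h_def using bproj_l2[OF R g] .
  have hU: "h x = g x" if "x \<in> U" for x
  proof -
    have "h x = l2inner (R g) (ev x)" by (simp add: l2inner_ev h_def)
    also have "\<dots> = l2inner g (R (ev x))" by (rule bproj_selfadj[OF R g ev_l2])
    also have "\<dots> = g x" using fx[OF that] by (simp add: l2inner_ev)
    finally show ?thesis .
  qed
  have "l2inner h h = l2inner g (R (R g))" unfolding h_def
    by (rule bproj_selfadj[OF R g bproj_l2[OF R g]])
  also have "\<dots> = l2inner g h" unfolding h_def using bproj_idem[OF R g] by simp
  also have "\<dots> = l2inner g g" unfolding l2inner_def
    by (rule infsum_cong) (metis g0 hU mult_zero_left)
  finally have "l2inner h h = l2inner g g" .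
  then have eq: "infsum (\<lambda>x. (cmod (h x))\<^sup>2) UNIV = infsum (\<lambda>x. (cmod (g x))\<^sup>2) UNIV"
    using l2inner_self[OF h] l2inner_self[OF g] by simp
  have hs: "((\<lambda>x. (cmod (h x))\<^sup>2 + - (cmod (g x))\<^sup>2) has_sum
     (infsum (\<lambda>x. (cmod (h x))\<^sup>2) UNIV + - infsum (\<lambda>x. (cmod (g x))\<^sup>2) UNIV)) UNIV"
    by (intro has_sum_add has_sum_infsum l2_sum[OF h])
       (simp add: has_sum_uminus has_sum_infsum l2_sum[OF g])
  have nn: "0 \<le> (cmod (h y))\<^sup>2 + - (cmod (g y))\<^sup>2" for y
    using hU g0 by (cases "y \<in> U") auto
  have "(cmod (h y))\<^sup>2 + - (cmod (g y))\<^sup>2 = 0" for y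
    by (rule nonneg_has_sum_le_0D[OF hs]) (use eq nn in auto)
  then have cm: "cmod (h y) = cmod (g y)" for y by (simp add: power2_eq_iff_nonneg)
  have "h y = g y" for y
  proof (cases "y \<in> U")
    case True then show ?thesis using hU by simp
  next
    case False
    then have "cmod (h y) = 0" using cm g0 by simp
    then show ?thesis using False g0 by simp
  qed
  then show ?thesis unfolding h_def by auto
qed

lemma mop_sup: "bproj_sup (\<lambda>n. mop (A n)) (mop (\<Union>n. A n))"
  unfolding bproj_sup_def
proof (intro conjI allI impI)
  show "bproj (mop (\<Union> (range A)))" by (rule bproj_mop)
  show "bproj_le (mop (A n)) (mop (\<Union> (range A)))" for n
    by (auto simp: bproj_le_def op_eq_def mop_def ind_def fun_eq_iff)
  fix R assume a: "bproj R \<and> (\<forall>n. bproj_le (mop (A n)) R)"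
  then have R: "bproj R" by blast
  have fx: "R (ev x) = ev x" if xU: "x \<in> (\<Union>n. A n)" for x
  proof -
    obtain n where "x \<in> A n" using xU by blast
    then have "mop (A n) (ev x) = ev x" by (rule mop_ev)
    moreover have "R (mop (A n) (ev x)) = mop (A n) (ev x)"
      using a ev_l2[of x] unfolding bproj_le_def op_eq_def by auto
    ultimately show ?thesis by simp
  qed
  show "bproj_le (mop (\<Union> (range A))) R"
    unfolding bproj_le_def op_eq_def
  proof (intro ballI)
    fix f :: "'a \<Rightarrow> complex" assume f: "f \<in> l2"
    have g0: "\<And>y. y \<notin> (\<Union>n. A n) \<Longrightarrow> mop (\<Union>n. A n) f y = 0"
      by (simp add: mop_def ind_def)
    have "R (mop (\<Union> (range A)) f) = mop (\<Union> (range A)) f"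
      by (rule mop_le_fix[OF R fx mop_l2[OF f] g0])
    then show "(R \<circ> mop (\<Union> (range A))) f = mop (\<Union> (range A)) f" by simp
  qed
qed

lemma l2norm_single: "l2norm (\<lambda>y. ind {a} y * c) = cmod c"
  unfolding l2norm_def by (subst infsum_single_pt[of a]) (auto simp: ind_def)

lemma cpt_mop_single: "cpt_op (mop {a})"
  unfolding cpt_op_def
proof (intro conjI allI impI)
  show "bop (mop {a})" by (rule bop_mop)
  fix f :: "nat \<Rightarrow> 'a \<Rightarrow> complex" assume f: "\<forall>n. f n \<in> l2 \<and> l2norm (f n) \<le> 1"
  define c where "c n = f n a" for n
  have "cmod (c n) \<le> 1" for n
  proof -
    have "f n \<in> l2" "l2norm (f n) \<le> 1" using f by auto
    then show ?thesis unfolding c_def by (meson coord_le order_trans)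
  qed
  then have "bounded (range c)" unfolding bounded_iff by blast
  then obtain l r where r: "strict_mono r" "(c \<circ> r) \<longlonglongrightarrow> l"
    using bounded_imp_convergent_subsequence by blast
  have "Cauchy (c \<circ> r)" using r(2) by (rule LIMSEQ_imp_Cauchy)
  then have C: "\<forall>e>0. \<exists>N. \<forall>m\<ge>N. \<forall>n\<ge>N. cmod (c (r m) - c (r n)) < e"
    unfolding Cauchy_def dist_norm by simp
  have eq: "l2norm (\<lambda>x. mop {a} (f m) x - mop {a} (f n) x) = cmod (c m - c n)" for m n
  proof -
    have "(\<lambda>x. mop {a} (f m) x - mop {a} (f n) x) = (\<lambda>y. ind {a} y * (c m - c n))"
      by (auto simp: fun_eq_iff mop_def ind_def c_def)
    then show ?thesis by (simp add: l2norm_single)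
  qed
  have ex: "\<exists>r::nat\<Rightarrow>nat. strict_mono r \<and> (\<forall>e>0. \<exists>N. \<forall>m\<ge>N. \<forall>n\<ge>N. cmod (c (r m) - c (r n)) < e)"
    using r(1) C by blast
  show "\<exists>r::nat\<Rightarrow>nat. strict_mono r \<and> (\<forall>e>0. \<exists>N. \<forall>m\<ge>N. \<forall>n\<ge>N.
        l2norm (\<lambda>x. mop {a} (f (r m)) x - mop {a} (f (r n)) x) < e)"
    unfolding eq by (rule ex)
qed


lemma aleph1_struct:
  assumes "is_aleph1 TYPE('k)"
  shows "\<not> countable (UNIV::'k set) \<and>
    (\<exists>P::'k\<Rightarrow>'k set. (\<forall>\<beta>. countable (P \<beta>)) \<and> (\<forall>\<alpha>. countable {\<beta>. \<alpha> \<notin> P \<beta>}))"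
proof -
  let ?r = "card_of (UNIV::'k set)"
  have iso: "(?r, cardSuc natLeq) \<in> ordIso" using assms unfolding is_aleph1_def by simp
  have small: "countable X" if "(card_of X, ?r) \<in> ordLess" for X :: "'k set"
  proof -
    have "(card_of X, cardSuc natLeq) \<in> ordLess" using that iso ordLess_ordIso_trans by blast
    then have "(card_of X, natLeq) \<in> ordLeq"
      using cardSuc_ordLeq_ordLess[OF natLeq_Card_order card_of_Card_order] by blast
    then show ?thesis using countable_card_le_natLeq by blast
  qed
  have unc: "\<not> countable (UNIV::'k set)"
  proof
    assume "countable (UNIV::'k set)"
    then have "(?r, natLeq) \<in> ordLeq" using countable_card_le_natLeq by blast
    moreover have "(natLeq, cardSuc natLeq) \<in> ordLess" using cardSuc_greater natLeq_Card_order by blast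
    ultimately have "(?r, cardSuc natLeq) \<in> ordLess" using ordLeq_ordLess_trans by blast
    then show False using iso ordLess_irreflexive ordLess_ordIso_trans ordIso_symmetric
      by (metis not_ordLess_ordIso)
  qed
  have us: "countable (underS ?r a)" for a
    by (rule small, rule card_of_underS[OF card_of_Card_order]) (simp add: Field_card_of)
  have tot: "(x, y) \<in> ?r \<or> (y, x) \<in> ?r" for x y
    using card_of_Well_order[of "UNIV::'k set"]
    unfolding well_order_on_def linear_order_on_def total_on_def partial_order_on_def
      preorder_on_def refl_on_def
    by (metis Field_card_of UNIV_I card_of_Field_ordIso iso ordIso_symmetric)
  have "countable {\<beta>. \<alpha> \<notin> underS ?r \<beta>}" for \<alpha>
  proof -
    have "{\<beta>. \<alpha> \<notin> underS ?r \<beta>} \<subseteq> insert \<alpha> (underS ?r \<alpha>)"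
      using tot unfolding underS_def by auto
    then show ?thesis using us[of \<alpha>] by (metis countable_insert countable_subset)
  qed
  then show ?thesis using unc us by (intro conjI exI[of _ "\<lambda>\<beta>. underS ?r \<beta>"]) auto
qed

lemma ulam_core:
  fixes \<nu> :: "'k set \<Rightarrow> real" and P :: "'k \<Rightarrow> 'k set" and g :: "'k \<Rightarrow> 'k \<Rightarrow> nat"
  assumes nn: "\<And>A. \<nu> A \<ge> 0" and one: "\<nu> UNIV = 1"
    and add: "\<And>A B. A \<inter> B = {} \<Longrightarrow> \<nu> (A \<union> B) = \<nu> A + \<nu> B"
    and cnull: "\<And>A::nat \<Rightarrow> 'k set. (\<forall>n. \<nu> (A n) = 0) \<Longrightarrow> \<nu> (\<Union>n. A n) = 0"
    and sing: "\<And>x. \<nu> {x} = 0"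
    and unc: "\<not> countable (UNIV::'k set)"
    and inj: "\<And>\<beta>. inj_on (g \<beta>) (P \<beta>)"
    and cnt: "\<And>\<alpha>. countable {\<beta>. \<alpha> \<notin> P \<beta>}"
  shows False
proof -
  have mono: "\<nu> A \<le> \<nu> B" if "A \<subseteq> B" for A B
  proof -
    have "B = A \<union> (B - A)" using that by auto
    then have "\<nu> B = \<nu> A + \<nu> (B - A)" using add[of A "B - A"] by auto
    then show ?thesis using nn[of "B - A"] by linarith
  qed
  have sub: "\<nu> (X \<union> Y) \<le> \<nu> X + \<nu> Y" for X Y
  proof -
    have "X \<union> Y = X \<union> (Y - X)" by auto
    then have "\<nu> (X \<union> Y) = \<nu> X + \<nu> (Y - X)" using add[of X "Y - X"] by auto
    then show ?thesis using mono[of "Y - X" Y] by auto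
  qed
  have empty: "\<nu> {} = 0" using add[of "{}" "{}"] by simp
  have cntnull: "\<nu> C = 0" if "countable C" for C
  proof (cases "C = {}")
    case True then show ?thesis using empty by simp
  next
    case False
    have "(\<Union>n. {from_nat_into C n}) = range (from_nat_into C)" by auto
    then have "C = (\<Union>n. {from_nat_into C n})"
      using range_from_nat_into[OF False that] by simp
    then show ?thesis using cnull[of "\<lambda>n. {from_nat_into C n}"] sing by simp
  qed
  define A where "A n \<alpha> = {\<beta>. \<alpha> \<in> P \<beta> \<and> g \<beta> \<alpha> = n}" for n \<alpha>
  have disj: "A n \<alpha> \<inter> A n \<alpha>' = {}" if ne: "\<alpha> \<noteq> \<alpha>'" for n \<alpha> \<alpha>'
  proof -
    have "\<beta> \<notin> A n \<alpha> \<inter> A n \<alpha>'" for \<beta>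
    proof
      assume "\<beta> \<in> A n \<alpha> \<inter> A n \<alpha>'"
      then have "\<alpha> \<in> P \<beta>" "\<alpha>' \<in> P \<beta>" "g \<beta> \<alpha> = g \<beta> \<alpha>'" unfolding A_def by auto
      then have "\<alpha> = \<alpha>'" using inj[of \<beta>] by (rule_tac inj_onD) 
      then show False using ne by simp
    qed
    then show ?thesis by blast
  qed
  have "\<exists>n. \<nu> (A n \<alpha>) > 0" for \<alpha>
  proof (rule ccontr)
    assume "\<not> ?thesis"
    then have "\<nu> (A n \<alpha>) \<le> 0" for n by (simp add: not_less)
    then have "\<forall>n. \<nu> (A n \<alpha>) = 0" using nn by (simp add: order.antisym)
    then have 0: "\<nu> (\<Union>n. A n \<alpha>) = 0" by (rule cnull)
    have eqU: "UNIV = {\<beta>. \<alpha> \<notin> P \<beta>} \<union> (\<Union>n. A n \<alpha>)" unfolding A_def by auto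
    have "\<nu> UNIV \<le> \<nu> {\<beta>. \<alpha> \<notin> P \<beta>} + \<nu> (\<Union>n. A n \<alpha>)"
      by (subst eqU) (rule sub)
    then show False using 0 cntnull[OF cnt[of \<alpha>]] one by simp
  qed
  then obtain N where N: "\<And>\<alpha>. \<nu> (A (N \<alpha>) \<alpha>) > 0" by metis
  have "UNIV = (\<Union>n. {\<alpha>. N \<alpha> = n})" by auto
  have "\<exists>n. \<not> countable {\<alpha>. N \<alpha> = n}"
  proof (rule ccontr)
    assume "\<not> ?thesis"
    then have "countable (\<Union>n. {\<alpha>. N \<alpha> = n})" by (intro countable_UN) auto
    then show False using unc \<open>UNIV = (\<Union>n. {\<alpha>. N \<alpha> = n})\<close> by simp
  qed
  then obtain n where n: "\<not> countable {\<alpha>. N \<alpha> = n}" by blast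
  define S where "S = {\<alpha>. N \<alpha> = n}"
  define Bk where "Bk k = {\<alpha>\<in>S. \<nu> (A n \<alpha>) > 1 / real (Suc k)}" for k
  have Seq: "S = (\<Union>k. Bk k)"
  proof (intro equalityI subsetI)
    fix \<alpha> assume a: "\<alpha> \<in> S"
    then have "\<nu> (A n \<alpha>) > 0" using N unfolding S_def by auto
    then obtain k where "1 / real (Suc k) < \<nu> (A n \<alpha>)"
      by (metis reals_Archimedean inverse_eq_divide)
    then show "\<alpha> \<in> (\<Union>k. Bk k)" using a unfolding Bk_def by auto
  qed (auto simp: Bk_def)
  have "\<exists>k. \<not> countable (Bk k)"
  proof (rule ccontr)
    assume "\<not> ?thesis"
    then have "countable (\<Union>k. Bk k)" by (intro countable_UN) auto
    then show False using n Seq unfolding S_def by simp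
  qed
  then obtain k where k: "\<not> countable {\<alpha>\<in>S. \<nu> (A n \<alpha>) > 1 / real (Suc k)}"
    unfolding Bk_def by blast
  then have "infinite {\<alpha>\<in>S. \<nu> (A n \<alpha>) > 1 / real (Suc k)}" using countable_finite by blast
  then obtain F where F: "F \<subseteq> {\<alpha>\<in>S. \<nu> (A n \<alpha>) > 1 / real (Suc k)}" "finite F" "card F = Suc k"
    using infinite_arbitrarily_large by blast
  have fadd: "\<nu> (\<Union>\<alpha>\<in>G. A n \<alpha>) = (\<Sum>\<alpha>\<in>G. \<nu> (A n \<alpha>))" if "finite G" for G
    using that
  proof (induction G rule: finite_induct)
    case empty then show ?case using \<open>\<nu> {} = 0\<close> by simp
  next
    case (insert x G)
    have "A n x \<inter> A n \<alpha> = {}" if "\<alpha> \<in> G" for \<alpha>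
      using insert(2) that by (intro disj) auto
    then have "A n x \<inter> (\<Union>\<alpha>\<in>G. A n \<alpha>) = {}" by blast
    then show ?case using insert add by simp
  qed
  have "(\<Sum>\<alpha>\<in>F. 1 / real (Suc k)) < (\<Sum>\<alpha>\<in>F. \<nu> (A n \<alpha>))"
    using F by (intro sum_strict_mono) auto
  also have "\<dots> = \<nu> (\<Union>\<alpha>\<in>F. A n \<alpha>)" using fadd F by simp
  also have "\<dots> \<le> 1" using mono[of _ UNIV] one by simp
  finally show False using F by simp
qed


lemma aleph1_no_measure:
  fixes \<nu> :: "'k set \<Rightarrow> real"
  assumes al: "is_aleph1 TYPE('k)"
    and nn: "\<And>A. \<nu> A \<ge> 0" and one: "\<nu> UNIV = 1"
    and add: "\<And>A B. A \<inter> B = {} \<Longrightarrow> \<nu> (A \<union> B) = \<nu> A + \<nu> B"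
    and cnull: "\<And>A::nat \<Rightarrow> 'k set. (\<forall>n. \<nu> (A n) = 0) \<Longrightarrow> \<nu> (\<Union>n. A n) = 0"
    and sing: "\<And>x. \<nu> {x} = 0"
  shows False
proof -
  obtain P :: "'k \<Rightarrow> 'k set" where P: "\<And>\<beta>. countable (P \<beta>)" "\<And>\<alpha>. countable {\<beta>. \<alpha> \<notin> P \<beta>}"
    and unc: "\<not> countable (UNIV :: 'k set)"
    using aleph1_struct[OF al] by blast
  show False
    by (rule ulam_core[OF nn one add cnull sing unc, of "\<lambda>\<beta>. to_nat_on (P \<beta>)" P])
       (use P in \<open>auto intro: inj_on_to_nat_on\<close>)
qed

lemma ind_linf: "ind A \<in> linf"
  unfolding linf_def bounded_iff by (auto simp: ind_def intro!: exI[of _ 1])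

lemma ind_proj: "linf_proj (ind A)"
  unfolding linf_proj_def using ind_linf by (auto simp: ind_def)

lemma ind_sup: "linf_proj_sup (\<lambda>n. ind (A n)) (ind (\<Union>n. A n))"
  unfolding linf_proj_sup_def linf_proj_le_def using ind_proj
  by (auto simp: ind_def)

lemma part_i_linf:
  assumes al: "is_aleph1 TYPE('k)"
  shows "\<not> (\<exists>\<phi> :: ('k \<Rightarrow> complex) \<Rightarrow> complex. linf_state \<phi> \<and> linf_regular \<phi> \<and> linf_singular \<phi>)"
proof
  assume "\<exists>\<phi> :: ('k \<Rightarrow> complex) \<Rightarrow> complex. linf_state \<phi> \<and> linf_regular \<phi> \<and> linf_singular \<phi>"
  then obtain \<phi> :: "('k \<Rightarrow> complex) \<Rightarrow> complex" where st: "linf_state \<phi>" and reg: "linf_regular \<phi>"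
    and sg: "linf_singular \<phi>" by blast
  define \<nu> where "\<nu> A = Re (\<phi> (ind A))" for A
  have cn: "cnonneg (\<phi> (ind A))" for A
  proof -
    have "\<forall>x. cnonneg (ind A x)" by (simp add: cnonneg_def ind_def)
    then show ?thesis using st ind_linf unfolding linf_state_def by blast
  qed
  have eq: "\<phi> (ind A) = of_real (\<nu> A)" for A
    using cn[of A] unfolding \<nu>_def cnonneg_def by (simp add: complex_eqI)
  have lin: "\<phi> (\<lambda>x. a * f x + b * g x) = a * \<phi> f + b * \<phi> g" if "f \<in> linf" "g \<in> linf" for a b f g
    using st that unfolding linf_state_def by blast
  show False
  proof (rule aleph1_no_measure[OF al, of \<nu>])
    show "\<nu> A \<ge> 0" for A using cn[of A] unfolding \<nu>_def cnonneg_def by simp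
    have "ind (UNIV::'k set) = (\<lambda>_. 1)" by (simp add: ind_def fun_eq_iff)
    then show "\<nu> UNIV = 1" using st unfolding \<nu>_def linf_state_def by simp
    show "\<nu> (A \<union> B) = \<nu> A + \<nu> B" if "A \<inter> B = {}" for A B
    proof -
      have "ind (A \<union> B) = (\<lambda>x. 1 * ind A x + 1 * ind B x)"
        using that by (auto simp: ind_def fun_eq_iff)
      then have "\<phi> (ind (A \<union> B)) = \<phi> (ind A) + \<phi> (ind B)"
        using lin[OF ind_linf ind_linf, of 1 A 1 B] by simp
      then show ?thesis unfolding \<nu>_def by simp
    qed
    show "\<nu> (\<Union>n. A n) = 0" if "\<forall>n. \<nu> (A n) = 0" for A :: "nat \<Rightarrow> 'k set"
    proof -
      have "\<forall>n. \<phi> (ind (A n)) = 0" using that eq by simp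
      then have r: "(\<forall>n. linf_proj (ind (A n))) \<and> linf_proj_sup (\<lambda>n. ind (A n)) (ind (\<Union>n. A n)) \<and> (\<forall>n. \<phi> (ind (A n)) = 0)"
        using ind_proj ind_sup by blast
      have "\<phi> (ind (\<Union>n. A n)) = 0"
        by (rule reg[unfolded linf_regular_def, rule_format, OF r])
      then show ?thesis unfolding \<nu>_def by simp
    qed
    show "\<nu> {x} = 0" for x
    proof -
      have "finite {y. ind {x} y \<noteq> 0}" by (simp add: ind_def)
      then show ?thesis using sg unfolding linf_singular_def \<nu>_def by simp
    qed
  qed
qed

lemma part_i_bl2:
  assumes al: "is_aleph1 TYPE('k)"
  shows "\<not> (\<exists>\<psi> :: 'k l2op \<Rightarrow> complex. bl2_state \<psi> \<and> bl2_regular \<psi> \<and> bl2_singular \<psi>)"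
proof
  assume "\<exists>\<psi> :: 'k l2op \<Rightarrow> complex. bl2_state \<psi> \<and> bl2_regular \<psi> \<and> bl2_singular \<psi>"
  then obtain \<phi> :: "'k l2op \<Rightarrow> complex" where st: "bl2_state \<phi>" and reg: "bl2_regular \<phi>"
    and sg: "bl2_singular \<phi>" by blast
  define \<nu> where "\<nu> A = Re (\<phi> (mop A))" for A
  have cn: "cnonneg (\<phi> (mop A))" for A
    using st bop_mop mop_pos unfolding bl2_state_def by blast
  have eq: "\<phi> (mop A) = of_real (\<nu> A)" for A
    using cn[of A] unfolding \<nu>_def cnonneg_def by (simp add: complex_eqI)
  show False
  proof (rule aleph1_no_measure[OF al, of \<nu>])
    show "\<nu> A \<ge> 0" for A using cn[of A] unfolding \<nu>_def cnonneg_def by simp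
    show "\<nu> UNIV = 1" using st unfolding \<nu>_def bl2_state_def mop_UNIV by simp
    show "\<nu> (A \<union> B) = \<nu> A + \<nu> B" if "A \<inter> B = {}" for A B
    proof -
      have "\<phi> (op_lin 1 (mop A) 1 (mop B)) = 1 * \<phi> (mop A) + 1 * \<phi> (mop B)"
        using st bop_mop unfolding bl2_state_def by blast
      then show ?thesis unfolding \<nu>_def mop_disj[OF that] by simp
    qed
    show "\<nu> (\<Union>n. A n) = 0" if "\<forall>n. \<nu> (A n) = 0" for A :: "nat \<Rightarrow> 'k set"
    proof -
      have "\<forall>n. \<phi> (mop (A n)) = 0" using that eq by simp
      then have r: "(\<forall>n. bproj (mop (A n))) \<and> bproj_sup (\<lambda>n. mop (A n)) (mop (\<Union>n. A n)) \<and> (\<forall>n. \<phi> (mop (A n)) = 0)"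
        using bproj_mop mop_sup by blast
      have "\<phi> (mop (\<Union>n. A n)) = 0"
        by (rule reg[unfolded bl2_regular_def, rule_format, OF r])
      then show ?thesis unfolding \<nu>_def by simp
    qed
    show "\<nu> {x} = 0" for x
      using sg cpt_mop_single[of x] unfolding bl2_singular_def \<nu>_def by simp
  qed
qed

lemma ulam_measure:
  assumes "ulam_rvm TYPE('k)"
  obtains M :: "'k measure" where "sets M = UNIV" "space M = UNIV" "prob_space M"
    "\<And>x. emeasure M {x} = 0"
proof -
  obtain \<mu> :: "'k set \<Rightarrow> real" where nn: "\<And>A. \<mu> A \<ge> 0" and one: "\<mu> UNIV = 1"
    and sg: "\<And>x. \<mu> {x} = 0"
    and ca: "\<And>A :: nat \<Rightarrow> 'k set. disjoint_family A \<Longrightarrow> (\<lambda>n. \<mu> (A n)) sums \<mu> (\<Union>n. A n)"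
    using assms unfolding ulam_rvm_def by blast
  have "(\<lambda>n. \<mu> {}) sums \<mu> (\<Union>n::nat. {})" by (rule ca) (simp add: disjoint_family_on_def)
  then have "(\<lambda>n. \<mu> {}) \<longlonglongrightarrow> 0" by (intro summable_LIMSEQ_zero) (simp add: sums_summable)
  then have e: "\<mu> {} = 0" by (simp add: LIMSEQ_const_iff)
  define M where "M = measure_of UNIV (Pow UNIV) (\<lambda>A. ennreal (\<mu> A))"
  have pos: "positive (Pow UNIV) (\<lambda>A. ennreal (\<mu> A))" unfolding positive_def using e by simp
  have cadd: "countably_additive (Pow UNIV) (\<lambda>A. ennreal (\<mu> A))"
    unfolding countably_additive_def
  proof (intro allI impI)
    fix A :: "nat \<Rightarrow> 'k set" assume "disjoint_family A"
    then have "(\<lambda>n. ennreal (\<mu> (A n))) sums ennreal (\<mu> (\<Union>n. A n))"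
      using ca nn by simp
    then show "(\<Sum>i. ennreal (\<mu> (A i))) = ennreal (\<mu> (\<Union> (range A)))" by (rule sums_unique[symmetric])
  qed
  have sa: "sigma_algebra UNIV (Pow (UNIV::'k set))" by (rule sigma_algebra_Pow)
  have em: "emeasure M A = ennreal (\<mu> A)" for A
    unfolding M_def by (rule emeasure_measure_of_sigma[OF sa pos cadd]) simp
  have sets: "sets M = UNIV" unfolding M_def using sigma_algebra.sigma_sets_eq[OF sa] by simp
  have space: "space M = UNIV" unfolding M_def by simp
  have "prob_space M" by (rule prob_spaceI) (simp add: space em one)
  then show ?thesis using that sets space em sg by simp
qed

locale gm = prob_space M for M :: "'k measure" +
  assumes sets_M: "sets M = UNIV" and space_M: "space M = UNIV" and sing_M: "\<And>x. emeasure M {x} = 0"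
begin

lemma meas: "f \<in> borel_measurable M"
  unfolding measurable_def by (auto simp: sets_M space_M)

lemma intg: "(\<And>x. cmod (f x) \<le> B) \<Longrightarrow> integrable M f"
  by (rule integrable_const_bound[where B=B]) (auto intro: meas)

lemma intgr: "(\<And>x. \<bar>f x\<bar> \<le> (B::real)) \<Longrightarrow> integrable M f"
  by (rule integrable_const_bound[where B=B]) (auto intro: meas)

lemma fin_null: "finite S \<Longrightarrow> S \<in> null_sets M"
proof -
  assume "finite S"
  then have "(\<Union>x\<in>S. {x}) \<in> null_sets M"
    by (intro null_sets_UN') (auto simp: countable_finite null_sets_def sets_M sing_M)
  then show ?thesis by simp
qed

lemma ae_fin: "finite {x. \<not> P x} \<Longrightarrow> AE x in M. P x"
  by (rule AE_I'[OF fin_null]) (auto simp: space_M)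

lemma int_Re: "integrable M f \<Longrightarrow> Re (integral\<^sup>L M f) = integral\<^sup>L M (\<lambda>x. Re (f x))"
  using integral_bounded_linear[OF bounded_linear_Re] by (metis (no_types))

lemma int_Im: "integrable M f \<Longrightarrow> Im (integral\<^sup>L M f) = integral\<^sup>L M (\<lambda>x. Im (f x))"
  using integral_bounded_linear[OF bounded_linear_Im] by (metis (no_types))

lemma int_cnonneg:
  assumes b: "\<And>x. cmod (f x) \<le> B" and c: "\<And>x. cnonneg (f x)"
  shows "cnonneg (integral\<^sup>L M f)"
  using int_Re[OF intg[OF b]] int_Im[OF intg[OF b]] c
  unfolding cnonneg_def by simp

lemma int_one: "integral\<^sup>L M (\<lambda>_. 1::complex) = 1"
  using prob_space by simp

end

lemma linf_bound: "f \<in> linf \<Longrightarrow> \<exists>B. \<forall>x. cmod (f x) \<le> B"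
  unfolding linf_def bounded_iff by auto

lemma proj01: "linf_proj p \<Longrightarrow> p x = 0 \<or> p x = 1"
  unfolding linf_proj_def
  by (metis mult_cancel_left2 mult_left_cancel)

context gm
begin

lemma linf_part: "linf_state (integral\<^sup>L M) \<and> linf_regular (integral\<^sup>L M) \<and> linf_singular (integral\<^sup>L M)"
proof (intro conjI)
  have I: "integrable M f" if "f \<in> linf" for f
    using linf_bound[OF that] intg by blast
  show "linf_state (integral\<^sup>L M)"
    unfolding linf_state_def
  proof (intro conjI ballI allI impI)
    fix f g :: "'k \<Rightarrow> complex" and a b assume "f \<in> linf" "g \<in> linf"
    then show "integral\<^sup>L M (\<lambda>x. a * f x + b * g x) = a * integral\<^sup>L M f + b * integral\<^sup>L M g"
      using I by simp
  next
    fix f :: "'k \<Rightarrow> complex" assume "f \<in> linf" "\<forall>x. cnonneg (f x)"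
    then show "cnonneg (integral\<^sup>L M f)" using linf_bound int_cnonneg by blast
  next
    show "integral\<^sup>L M (\<lambda>_. 1::complex) = 1" by (rule int_one)
  qed
  show "linf_singular (integral\<^sup>L M)"
    unfolding linf_singular_def
    by (auto intro!: integral_eq_zero_AE ae_fin)
  show "linf_regular (integral\<^sup>L M)"
    unfolding linf_regular_def
  proof (intro allI impI)
    fix q :: "nat \<Rightarrow> 'k \<Rightarrow> complex" and Q
    assume a: "(\<forall>n. linf_proj (q n)) \<and> linf_proj_sup q Q \<and> (\<forall>n. integral\<^sup>L M (q n) = 0)"
    have ae: "AE x in M. q n x = 0" for n
    proof -
      have p: "linf_proj (q n)" using a by blast
      then have qi: "integrable M (q n)" using I unfolding linf_proj_def by blast
      have b01: "q n x = 0 \<or> q n x = 1" for x using proj01[OF p] .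
      have ri: "integrable M (\<lambda>x. Re (q n x))"
        by (rule intgr[where B=1]) (use b01 in \<open>metis abs_zero abs_one order_refl zero_less_one_class.zero_le_one one_complex.simps(1) zero_complex.simps(1)\<close>)
      have "integral\<^sup>L M (\<lambda>x. Re (q n x)) = 0" using int_Re[OF qi] a by simp
      then have "AE x in M. Re (q n x) = 0"
        using integral_nonneg_eq_0_iff_AE[OF ri] b01 by (metis (mono_tags, lifting) AE_I2 one_complex.simps(1) order_refl zero_complex.simps(1) zero_le_one)
      then show ?thesis by eventually_elim (use b01 in force)
    qed
    then have "AE x in M. \<forall>n. q n x = 0" by (simp add: AE_all_countable)
    moreover have "Q x = 0" if "\<forall>n. q n x = 0" for x
    proof -
      define R where "R = ind {y. \<exists>n. q n y \<noteq> 0}"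
      have "linf_proj R" unfolding R_def by (rule ind_proj)
      moreover have "linf_proj_le (q n) R" for n
        unfolding linf_proj_le_def R_def ind_def by auto
      ultimately have "linf_proj_le Q R" using a unfolding linf_proj_sup_def by blast
      then have "R x * Q x = Q x" unfolding linf_proj_le_def by blast
      then show ?thesis using that unfolding R_def ind_def by simp
    qed
    ultimately have "AE x in M. Q x = 0" by (auto elim: AE_mp)
    then show "integral\<^sup>L M Q = 0" by (rule integral_eq_zero_AE)
  qed
qed

end

lemma bop_bound: assumes "bop T" shows "\<exists>C. \<forall>x. cmod (T (ev x) x) \<le> C"
proof -
  have l: "\<forall>f\<in>l2. T f \<in> l2" using assms unfolding bop_def by (rule conjunct1)
  have "\<exists>C. \<forall>f\<in>l2. l2norm (T f) \<le> C * l2norm f"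
    using assms unfolding bop_def by (rule conjunct2[THEN conjunct2])
  then obtain C where C: "\<forall>f\<in>l2. l2norm (T f) \<le> C * l2norm f" by blast
  have "cmod (T (ev x) x) \<le> C" for x
  proof -
    have "cmod (T (ev x) x) \<le> l2norm (T (ev x))" by (rule coord_le[OF l[rule_format, OF ev_l2]])
    also have "\<dots> \<le> C" using C[rule_format, OF ev_l2[of x]] by (simp add: l2norm_ev)
    finally show ?thesis .
  qed
  then show ?thesis by blast
qed

lemma bop_l2: "bop T \<Longrightarrow> f \<in> l2 \<Longrightarrow> T f \<in> l2"
  unfolding bop_def by (drule conjunct1) blast

lemma cpt_finite:
  assumes T: "cpt_op T" and e: "e > 0"
  shows "finite {x. e \<le> cmod (T (ev x) x)}"
proof (rule ccontr)
  let ?S = "{x. e \<le> cmod (T (ev x) x)}"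
  assume "infinite ?S"
  then obtain s :: "nat \<Rightarrow> 'a" where s: "inj s" "range s \<subseteq> ?S"
    using infinite_countable_subset by blast
  have bT: "bop T" using T unfolding cpt_op_def by (rule conjunct1)
  have hyp: "\<And>n. ev (s n) \<in> l2 \<and> l2norm (ev (s n)) \<le> 1" by (simp add: ev_l2 l2norm_ev)
  have "\<exists>r::nat\<Rightarrow>nat. strict_mono r \<and> (\<forall>e>0. \<exists>N. \<forall>m\<ge>N. \<forall>n\<ge>N. l2norm (\<lambda>x. T (ev (s (r m))) x - T (ev (s (r n))) x) < e)"
    using T[unfolded cpt_op_def, THEN conjunct2, rule_format, OF hyp] .
  then obtain r :: "nat \<Rightarrow> nat" where r: "strict_mono r" and
    C: "\<forall>e>0. \<exists>N. \<forall>m\<ge>N. \<forall>n\<ge>N. l2norm (\<lambda>x. T (ev (s (r m))) x - T (ev (s (r n))) x) < e"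
    by blast
  obtain N where N: "\<forall>m\<ge>N. \<forall>n\<ge>N. l2norm (\<lambda>x. T (ev (s (r m))) x - T (ev (s (r n))) x) < e/2"
    using C e by (meson half_gt_zero)
  define g where "g n = T (ev (s (r n)))" for n
  have gl: "g n \<in> l2" for n unfolding g_def by (rule bop_l2[OF bT ev_l2])
  have big: "e / 2 \<le> cmod (g N (s (r n)))" if "n \<ge> N" for n
  proof -
    have "e \<le> cmod (g n (s (r n)))" using s(2) unfolding g_def by auto
    moreover have "cmod (g n (s (r n)) - g N (s (r n))) \<le> l2norm (\<lambda>x. g n x - g N x)"
      using coord_le[OF l2_diff[OF gl[of n] gl[of N]], of "s (r n)"] by simp
    moreover have "l2norm (\<lambda>x. g n x - g N x) < e / 2" using N that unfolding g_def by auto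
    moreover have "cmod (g n (s (r n))) \<le> cmod (g n (s (r n)) - g N (s (r n))) + cmod (g N (s (r n)))"
      using norm_triangle_ineq2[of "g n (s (r n))" "g N (s (r n))"] by simp
    ultimately show ?thesis by linarith
  qed
  have fin: "finite {y. e / 2 \<le> cmod (g N y)}" by (rule l2_finite_large[OF gl]) (use e in simp)
  have "(s \<circ> r) ` {N..} \<subseteq> {y. e / 2 \<le> cmod (g N y)}" using big by auto
  then have "finite ((s \<circ> r) ` {N..})" using fin finite_subset by blast
  moreover have "inj (s \<circ> r)" by (rule inj_compose[OF s(1) strict_mono_imp_inj_on[OF r]])
  then have "inj_on (s \<circ> r) {N..}" by (rule inj_on_subset) simp
  ultimately have "finite {N..}" using finite_imageD by blast
  then show False using infinite_Ici[of N] by simp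
qed

lemma diag_proj: assumes P: "bproj P"
  shows "P (ev x) x = of_real (infsum (\<lambda>y. (cmod (P (ev x) y))\<^sup>2) UNIV)"
proof -
  have "P (ev x) x = l2inner (P (ev x)) (ev x)" by (simp add: l2inner_ev)
  also have "\<dots> = l2inner (P (P (ev x))) (ev x)" using bproj_idem[OF P ev_l2] by simp
  also have "\<dots> = l2inner (P (ev x)) (P (ev x))"
    by (rule bproj_selfadj[OF P bproj_l2[OF P ev_l2] ev_l2])
  also have "\<dots> = of_real (infsum (\<lambda>y. (cmod (P (ev x) y))\<^sup>2) UNIV)"
    by (rule l2inner_self[OF bproj_l2[OF P ev_l2]])
  finally show ?thesis .
qed

lemma diag_zero: assumes P: "bproj P" and z: "P (ev x) x = 0" shows "P (ev x) = (\<lambda>_. 0)"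
proof
  fix y
  have "infsum (\<lambda>y. (cmod (P (ev x) y))\<^sup>2) UNIV = 0" using diag_proj[OF P, of x] z by simp
  then have "(cmod (P (ev x) y))\<^sup>2 = 0"
    by (intro nonneg_infsum_le_0D[OF _ l2_sum[OF bproj_l2[OF P ev_l2]]]) auto
  then show "P (ev x) y = 0" by simp
qed

lemma proj_kill: assumes P: "bproj P" and z: "P (ev x) = (\<lambda>_. 0)" and f: "f \<in> l2"
  shows "P f x = 0"
proof -
  have "P f x = l2inner (P f) (ev x)" by (simp add: l2inner_ev)
  also have "\<dots> = l2inner f (P (ev x))" by (rule bproj_selfadj[OF P f ev_l2])
  also have "\<dots> = 0" unfolding z l2inner_def by simp
  finally show ?thesis .
qed

context gm
begin

lemma bl2_part: "bl2_state (\<lambda>T. integral\<^sup>L M (\<lambda>x. T (ev x) x)) \<and>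
  bl2_regular (\<lambda>T. integral\<^sup>L M (\<lambda>x. T (ev x) x)) \<and> bl2_singular (\<lambda>T. integral\<^sup>L M (\<lambda>x. T (ev x) x))"
proof (intro conjI)
  have I: "integrable M (\<lambda>x. T (ev x) x)" if bT: "bop T" for T :: "'k l2op"
  proof -
    obtain C where "\<forall>x. cmod (T (ev x) x) \<le> C" using bop_bound[OF bT] by blast
    then show ?thesis by (intro intg[where B=C]) auto
  qed
  show "bl2_state (\<lambda>T. integral\<^sup>L M (\<lambda>x. T (ev x) x))"
    unfolding bl2_state_def
  proof (intro conjI allI impI)
    fix S T :: "'k l2op" and a b assume "bop S \<and> bop T"
    then show "integral\<^sup>L M (\<lambda>x. op_lin a S b T (ev x) x) =
      a * integral\<^sup>L M (\<lambda>x. S (ev x) x) + b * integral\<^sup>L M (\<lambda>x. T (ev x) x)"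
      using I by (simp add: op_lin_def)
  next
    fix T :: "'k l2op" assume a: "bop T \<and> (\<forall>f\<in>l2. cnonneg (l2inner (T f) f))"
    have cx: "cnonneg (T (ev x) x)" for x
      using a ev_l2[of x] l2inner_ev[of "T (ev x)" x] by auto
    obtain C where C: "\<forall>x. cmod (T (ev x) x) \<le> C" using bop_bound a by blast
    show "cnonneg (integral\<^sup>L M (\<lambda>x. T (ev x) x))"
      by (rule int_cnonneg[where B=C]) (use C cx in auto)
  next
    have e1: "(\<lambda>x. id (ev x) x) = (\<lambda>_. 1::complex)" by (simp add: ev_self)
    show "integral\<^sup>L M (\<lambda>x. id (ev x) x) = 1" unfolding e1 by (rule int_one)
  qed
  show "bl2_singular (\<lambda>T. integral\<^sup>L M (\<lambda>x. T (ev x) x))"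
    unfolding bl2_singular_def
  proof (intro allI impI)
    fix T :: "'k l2op" assume T: "cpt_op T"
    then have bT: "bop T" unfolding cpt_op_def by (rule conjunct1)
    let ?h = "\<lambda>x. T (ev x) x"
    have le: "cmod (integral\<^sup>L M ?h) \<le> e" if e: "e > 0" for e
    proof -
      have ae: "AE x in M. cmod (?h x) \<le> e"
        by (rule ae_fin, rule finite_subset[OF _ cpt_finite[OF T e]]) auto
      obtain C where C: "\<forall>x. cmod (?h x) \<le> C" using bop_bound[OF bT] by blast
      have "cmod (integral\<^sup>L M ?h) \<le> integral\<^sup>L M (\<lambda>x. cmod (?h x))" by (rule integral_norm_bound)
      also have "\<dots> \<le> integral\<^sup>L M (\<lambda>_. e)"
        by (rule integral_mono_AE[OF intgr[where B=C] _ ae]) (use C in auto)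
      also have "\<dots> = e" using prob_space by simp
      finally show ?thesis .
    qed
    show "integral\<^sup>L M ?h = 0"
    proof (rule ccontr)
      assume "integral\<^sup>L M ?h \<noteq> 0"
      then have "cmod (integral\<^sup>L M ?h) > 0" by simp
      then show False using le[of "cmod (integral\<^sup>L M ?h) / 2"] by simp
    qed
  qed
  show "bl2_regular (\<lambda>T. integral\<^sup>L M (\<lambda>x. T (ev x) x))"
    unfolding bl2_regular_def
  proof (intro allI impI)
    fix q :: "nat \<Rightarrow> 'k l2op" and Q
    assume a: "(\<forall>n. bproj (q n)) \<and> bproj_sup q Q \<and> (\<forall>n. integral\<^sup>L M (\<lambda>x. q n (ev x) x) = 0)"
    have ae: "AE x in M. q n (ev x) x = 0" for n
    proof -
      have P: "bproj (q n)" using a by blast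
      define d where "d x = infsum (\<lambda>y. (cmod (q n (ev x) y))\<^sup>2) UNIV" for x
      have dd: "q n (ev x) x = of_real (d x)" for x unfolding d_def by (rule diag_proj[OF P])
      have d0: "d x \<ge> 0" for x unfolding d_def by (simp add: infsum_nonneg)
      have bq: "bop (q n)" using P unfolding bproj_def by (rule conjunct1)
      obtain C where C: "\<forall>x. cmod (q n (ev x) x) \<le> C" using bop_bound[OF bq] by blast
      have qi: "integrable M (\<lambda>x. q n (ev x) x)" using I[OF bq] .
      have di: "integrable M d" by (rule intgr[where B=C]) (use C dd in \<open>metis norm_of_real\<close>)
      have "integral\<^sup>L M d = Re (integral\<^sup>L M (\<lambda>x. q n (ev x) x))"
        using int_Re[OF qi] dd by simp
      also have "\<dots> = 0" using a by simp
      finally have "AE x in M. d x = 0"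
        using integral_nonneg_eq_0_iff_AE[OF di] d0 by simp
      then show ?thesis by eventually_elim (simp add: dd)
    qed
    then have "AE x in M. \<forall>n. q n (ev x) x = 0" by (simp add: AE_all_countable)
    moreover have "Q (ev x) x = 0" if z: "\<forall>n. q n (ev x) x = 0" for x
    proof -
      define R where "R = mop (- {x})"
      have "bproj R" unfolding R_def by (rule bproj_mop)
      moreover have "bproj_le (q n) R" for n
        unfolding bproj_le_def op_eq_def
      proof (intro ballI)
        fix f :: "'k \<Rightarrow> complex" assume f: "f \<in> l2"
        have P: "bproj (q n)" using a by blast
        have "q n f x = 0" by (rule proj_kill[OF P diag_zero[OF P] f]) (use z in simp)
        then show "(R \<circ> q n) f = q n f" unfolding R_def by (auto simp: mop_def ind_def fun_eq_iff)
      qed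
      ultimately have "bproj_le Q R" using a unfolding bproj_sup_def by blast
      then have "R (Q (ev x)) = Q (ev x)" unfolding bproj_le_def op_eq_def using ev_l2[of x] by auto
      then have "R (Q (ev x)) x = Q (ev x) x" by simp
      then show ?thesis unfolding R_def by (simp add: mop_def ind_def)
    qed
    ultimately have "AE x in M. Q (ev x) x = 0" by (auto elim: AE_mp)
    then show "integral\<^sup>L M (\<lambda>x. Q (ev x) x) = 0" by (rule integral_eq_zero_AE)
  qed
qed

end

theorem theorem8p5:
  assumes "infinite (UNIV :: 'k set)"
  shows "(is_aleph1 TYPE('k) \<longrightarrow>
            \<not> (\<exists>\<phi> :: ('k \<Rightarrow> complex) \<Rightarrow> complex. linf_state \<phi> \<and> linf_regular \<phi> \<and> linf_singular \<phi>) \<and>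
            \<not> (\<exists>\<psi> :: 'k l2op \<Rightarrow> complex. bl2_state \<psi> \<and> bl2_regular \<psi> \<and> bl2_singular \<psi>))
       \<and> (ulam_rvm TYPE('k) \<longrightarrow>
            (\<exists>\<phi> :: ('k \<Rightarrow> complex) \<Rightarrow> complex. linf_state \<phi> \<and> linf_regular \<phi> \<and> linf_singular \<phi>) \<and>
            (\<exists>\<psi> :: 'k l2op \<Rightarrow> complex. bl2_state \<psi> \<and> bl2_regular \<psi> \<and> bl2_singular \<psi>))"
proof -
  have i: "is_aleph1 TYPE('k) \<longrightarrow>
            \<not> (\<exists>\<phi> :: ('k \<Rightarrow> complex) \<Rightarrow> complex. linf_state \<phi> \<and> linf_regular \<phi> \<and> linf_singular \<phi>) \<and>
            \<not> (\<exists>\<psi> :: 'k l2op \<Rightarrow> complex. bl2_state \<psi> \<and> bl2_regular \<psi> \<and> bl2_singular \<psi>)"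
    using part_i_linf part_i_bl2 by blast
  have ii: "ulam_rvm TYPE('k) \<longrightarrow>
            (\<exists>\<phi> :: ('k \<Rightarrow> complex) \<Rightarrow> complex. linf_state \<phi> \<and> linf_regular \<phi> \<and> linf_singular \<phi>) \<and>
            (\<exists>\<psi> :: 'k l2op \<Rightarrow> complex. bl2_state \<psi> \<and> bl2_regular \<psi> \<and> bl2_singular \<psi>)"
  proof
    assume u: "ulam_rvm TYPE('k)"
    obtain M :: "'k measure" where M: "sets M = UNIV" "space M = UNIV" "prob_space M"
      "\<And>x. emeasure M {x} = 0"
      using ulam_measure[OF u] by blast
    have g: "gm M" unfolding gm_def gm_axioms_def using M by blast
    show "(\<exists>\<phi> :: ('k \<Rightarrow> complex) \<Rightarrow> complex. linf_state \<phi> \<and> linf_regular \<phi> \<and> linf_singular \<phi>) \<and>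
            (\<exists>\<psi> :: 'k l2op \<Rightarrow> complex. bl2_state \<psi> \<and> bl2_regular \<psi> \<and> bl2_singular \<psi>)"
      using gm.linf_part[OF g] gm.bl2_part[OF g] by blast
  qed
  show ?thesis using i ii by blast
qed

end
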